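(* Let $q$ be a prime power and $n,r$ integers with $1\le r\le\lfloor n/2\rfloor$. Let $\mathcal{C}\subseteq\mathrm{GF}(q)^{r\times(n-r)}$ be any nonempty set of matrices and $I(\mathcal{C}) = \{R({\bf I}_r\mid{\bf C}) : {\bf C}\in\mathcal{C}\}\subseteq E_r(q,n)$. Then $I(\mathcal{C})$ has covering radius $r$, i.e. $\max_{U\in E_r(q,n)}\min_{{\bf C}\in\mathcal{C}} d_{\mathrm{I}}(U, R({\bf I}_r\mid{\bf C})) = r$.
   Context: $E_r(q,n)$ is the set of $r$-dimensional subspaces of $\mathrm{GF}(q)^n$; $R({\bf M})$ is the row space of a matrix ${\bf M}$; the injection distance is $d_{\mathrm{I}}(U,V)=\dim(U+V)-\min\{\dim U,\dim V\}$. *)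

theory Defs
  imports Main "HOL.Vector_Spaces" "HOL-Library.Function_Algebras"
begin

text \<open>Vectors of GF(q)^n are represented as functions nat \<Rightarrow> 'a vanishing from index n on;
  'a is a finite field (so q = CARD('a) is a prime power).\<close>

definition scl :: "'a::field \<Rightarrow> (nat \<Rightarrow> 'a) \<Rightarrow> (nat \<Rightarrow> 'a)" where
  "scl c v = (\<lambda>i. c * v i)"

definition Fvec :: "nat \<Rightarrow> (nat \<Rightarrow> 'a::field) set" where
  "Fvec n = {v. \<forall>i\<ge>n. v i = 0}"

definition sdim :: "(nat \<Rightarrow> 'a::field) set \<Rightarrow> nat" where
  "sdim U = vector_space.dim scl U"

definition Grass :: "nat \<Rightarrow> nat \<Rightarrow> (nat \<Rightarrow> 'a::field) set set" where
  "Grass r n = {U. module.subspace scl U \<and> U \<subseteq> Fvec n \<and> sdim U = r}"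

definition ssum :: "(nat \<Rightarrow> 'a::field) set \<Rightarrow> (nat \<Rightarrow> 'a) set \<Rightarrow> (nat \<Rightarrow> 'a) set" where
  "ssum U V = {u + v | u v. u \<in> U \<and> v \<in> V}"

definition injdist :: "(nat \<Rightarrow> 'a::field) set \<Rightarrow> (nat \<Rightarrow> 'a) set \<Rightarrow> nat" where
  "injdist U V = sdim (ssum U V) - min (sdim U) (sdim V)"

definition Mats :: "nat \<Rightarrow> nat \<Rightarrow> (nat \<Rightarrow> nat \<Rightarrow> 'a::field) set" where
  "Mats r m = {C. \<forall>i j. (r \<le> i \<or> m \<le> j) \<longrightarrow> C i j = 0}"

definition IC_row :: "nat \<Rightarrow> nat \<Rightarrow> (nat \<Rightarrow> nat \<Rightarrow> 'a::field) \<Rightarrow> nat \<Rightarrow> (nat \<Rightarrow> 'a)" where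
  "IC_row r n C k = (\<lambda>j. if j < r then (if j = k then 1 else 0)
                         else if j < n then C k (j - r) else 0)"

definition rowspace_IC :: "nat \<Rightarrow> nat \<Rightarrow> (nat \<Rightarrow> nat \<Rightarrow> 'a::field) \<Rightarrow> (nat \<Rightarrow> 'a) set" where
  "rowspace_IC r n C = module.span scl (IC_row r n C ` {..<r})"

end

theory Submission
  imports Defs
begin

lemma vs_scl: "vector_space (scl :: 'a::field \<Rightarrow> (nat \<Rightarrow> 'a) \<Rightarrow> _)"
  by unfold_locales (auto simp: scl_def fun_eq_iff algebra_simps)

interpretation vs: vector_space "scl :: 'a::field \<Rightarrow> (nat \<Rightarrow> 'a) \<Rightarrow> _"
  by (rule vs_scl)

lemma sum_fun_apply': "(\<Sum>x\<in>A. g x) (j::nat) = (\<Sum>x\<in>A. (g x j :: 'a::comm_monoid_add))"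
  by (induction A rule: infinite_finite_induct) auto

definition ee :: "nat \<Rightarrow> nat \<Rightarrow> 'a::field" where
  "ee j = (\<lambda>i. if i = j then 1 else 0)"

lemma indep_main:
  fixes C :: "nat \<Rightarrow> nat \<Rightarrow> 'a::field"
  assumes "2 * r \<le> n"
  shows "vs.independent (IC_row r n C ` {..<r} \<union> (ee ` {r..<2*r} :: (nat \<Rightarrow> 'a) set))"
proof (rule vs.independent_if_scalars_zero)
  let ?R = "IC_row r n C ` {..<r}"
  let ?E = "ee ` {r..<2*r} :: (nat \<Rightarrow> 'a) set"
  show "finite (?R \<union> ?E)" by simp
  fix f x
  assume S: "(\<Sum>x\<in>?R \<union> ?E. scl (f x) x) = 0" and x: "x \<in> ?R \<union> ?E"
  have ev: "(\<Sum>x\<in>?R \<union> ?E. f x * x j) = 0" for j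
    using fun_cong[OF S, of j] by (simp add: sum_fun_apply' scl_def)
  have R0: "f (IC_row r n C k) = 0" if k: "k < r" for k
  proof -
    have "\<forall>y\<in>?R \<union> ?E. f y * y k = (if y = IC_row r n C k then f y else 0)"
    proof
      fix y assume "y \<in> ?R \<union> ?E"
      then show "f y * y k = (if y = IC_row r n C k then f y else 0)"
      proof
        assume "y \<in> ?R"
        then obtain m where m: "m < r" "y = IC_row r n C m" by auto
        have "y = IC_row r n C k \<longleftrightarrow> m = k"
        proof
          assume "y = IC_row r n C k"
          then have "y m = IC_row r n C k m" by simp
          then show "m = k" using m k by (auto simp: IC_row_def split: if_splits)
        qed (simp add: m)
        then show ?thesis using m k by (auto simp: IC_row_def)
      next
        assume "y \<in> ?E"
        then obtain m where m: "r \<le> m" "y = ee m" by auto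
        have "y \<noteq> IC_row r n C k"
        proof
          assume "y = IC_row r n C k"
          then have "y k = IC_row r n C k k" by simp
          then show False using m k by (auto simp: IC_row_def ee_def)
        qed
        then show ?thesis using m k by (auto simp: ee_def)
      qed
    qed
    then have "(\<Sum>y\<in>?R \<union> ?E. f y * y k) = (\<Sum>y\<in>?R \<union> ?E. if y = IC_row r n C k then f y else 0)"
      by (intro sum.cong refl) blast
    also have "\<dots> = f (IC_row r n C k)" using k by (simp add: sum.delta')
    finally show ?thesis using ev[of k] by simp
  qed
  have E0: "f (ee m) = 0" if m: "r \<le> m" "m < 2*r" for m
  proof -
    have "\<forall>y\<in>?R \<union> ?E. f y * y m = (if y = ee m then f y else 0)"
    proof
      fix y assume "y \<in> ?R \<union> ?E"
      then show "f y * y m = (if y = ee m then f y else 0)"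
      proof
        assume "y \<in> ?R"
        then obtain k where k: "k < r" "y = IC_row r n C k" by auto
        have "y \<noteq> ee m"
        proof
          assume "y = ee m"
          then have "y k = ee m k" by simp
          then show False using m k by (auto simp: IC_row_def ee_def)
        qed
        then show ?thesis using R0 k by auto
      next
        assume "y \<in> ?E"
        then obtain p where p: "y = ee p" by auto
        show ?thesis using p by (auto simp: ee_def fun_eq_iff)
      qed
    qed
    then have "(\<Sum>y\<in>?R \<union> ?E. f y * y m) = (\<Sum>y\<in>?R \<union> ?E. if y = ee m then f y else 0)"
      by (intro sum.cong refl) blast
    also have "\<dots> = f (ee m)" using m by (simp add: sum.delta')
    finally show ?thesis using ev[of m] by simp
  qed
  show "f x = 0" using x R0 E0 by auto
qed


lemma card_R: "card (IC_row r n (C::nat \<Rightarrow> nat \<Rightarrow> 'a::field) ` {..<r}) = r"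
proof -
  have "inj_on (IC_row r n C) {..<r}"
  proof (rule inj_onI)
    fix k m assume "k \<in> {..<r}" "m \<in> {..<r}" "IC_row r n C k = IC_row r n C m"
    then have "IC_row r n C k k = IC_row r n C m k" by simp
    with \<open>k \<in> {..<r}\<close> show "k = m" by (auto simp: IC_row_def split: if_splits)
  qed
  then show ?thesis by (simp add: card_image)
qed

lemma card_E: "card (ee ` {r..<2*r} :: (nat \<Rightarrow> 'a::field) set) = r"
proof -
  have "inj_on (ee :: nat \<Rightarrow> nat \<Rightarrow> 'a) {r..<2*r}"
    by (rule inj_onI) (auto simp: ee_def fun_eq_iff split: if_splits)
  then show ?thesis by (simp add: card_image)
qed

lemma disj_RE: "IC_row r n (C::nat \<Rightarrow> nat \<Rightarrow> 'a::field) ` {..<r} \<inter> ee ` {r..<2*r} = {}"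
proof -
  { fix k m assume k: "k < r" and m: "r \<le> m" and eq: "IC_row r n C k = ee m"
    then have "IC_row r n C k k = ee m k" by simp
    with k m have False by (auto simp: IC_row_def ee_def) }
  then show ?thesis by fastforce
qed

lemma ssum_span: "ssum (vs.span A) (vs.span B) = vs.span (A \<union> B)"
  by (simp add: ssum_def vs.span_Un)

lemma dimV:
  assumes "2 * r \<le> n"
  shows "sdim (rowspace_IC r n (C::nat \<Rightarrow> nat \<Rightarrow> 'a::field)) = r"
proof -
  have "vs.independent (IC_row r n C ` {..<r})"
    using vs.independent_mono[OF indep_main[OF assms, of C]] by blast
  then show ?thesis
    unfolding sdim_def rowspace_IC_def using vs.dim_span_eq_card_independent card_R by metis
qed

lemma upper:
  assumes "2 * r \<le> n" "1 \<le> r" "U \<in> Grass r n"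
  shows "injdist U (rowspace_IC r n (C::nat \<Rightarrow> nat \<Rightarrow> 'a::{field})) \<le> r"
proof -
  have sub: "vs.subspace U" and dU: "sdim U = r" using assms(3) by (auto simp: Grass_def)
  obtain B where B: "B \<subseteq> U" "vs.independent B" "U \<subseteq> vs.span B" "card B = vs.dim U"
    by (rule vs.basis_exists)
  have cB: "card B = r" using B(4) dU by (simp add: sdim_def)
  have fB: "finite B" using cB assms(2) by (metis card.infinite not_one_le_zero)
  have UB: "U = vs.span B" using B(1,3) vs.span_minimal[OF B(1) sub] by blast
  let ?R = "IC_row r n C ` {..<r}"
  have eq: "ssum U (rowspace_IC r n C) = vs.span (B \<union> ?R)"
    unfolding UB rowspace_IC_def by (rule ssum_span)
  have "sdim (ssum U (rowspace_IC r n C)) \<le> card (B \<union> ?R)"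
    unfolding eq sdim_def by (rule vs.dim_le_card) (auto simp: fB)
  also have "\<dots> \<le> card B + card ?R" by (rule card_Un_le)
  finally have "sdim (ssum U (rowspace_IC r n C)) \<le> 2 * r" using cB card_R[of r n C] by simp
  then show ?thesis using dU dimV[OF assms(1), of C] by (simp add: injdist_def)
qed


lemma Fvec_subspace: "vs.subspace (Fvec n :: (nat \<Rightarrow> 'a::field) set)"
  by (auto simp: vs.subspace_def Fvec_def scl_def)

lemma U0_Grass:
  assumes "2 * r \<le> n"
  shows "vs.span (ee ` {r..<2*r}) \<in> (Grass r n :: (nat \<Rightarrow> 'a::field) set set)"
proof -
  let ?E = "ee ` {r..<2*r} :: (nat \<Rightarrow> 'a) set"
  have "vs.independent ?E"
    using vs.independent_mono[OF indep_main[OF assms, of "\<lambda>_ _. 0"]] by blast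
  then have "sdim (vs.span ?E) = r"
    unfolding sdim_def using vs.dim_span_eq_card_independent card_E by metis
  moreover have "?E \<subseteq> Fvec n" using assms by (auto simp: Fvec_def ee_def)
  then have "vs.span ?E \<subseteq> Fvec n" by (rule vs.span_minimal[OF _ Fvec_subspace])
  ultimately show ?thesis by (simp add: Grass_def)
qed

lemma lower:
  assumes "2 * r \<le> n"
  shows "injdist (vs.span (ee ` {r..<2*r})) (rowspace_IC r n (C::nat \<Rightarrow> nat \<Rightarrow> 'a::field)) = r"
proof -
  let ?E = "ee ` {r..<2*r} :: (nat \<Rightarrow> 'a) set"
  let ?R = "IC_row r n C ` {..<r}"
  have dU: "sdim (vs.span ?E) = r" using U0_Grass[OF assms, where 'a='a] by (simp add: Grass_def)
  have eq: "ssum (vs.span ?E) (rowspace_IC r n C) = vs.span (?R \<union> ?E)"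
    unfolding rowspace_IC_def by (simp add: ssum_span Un_commute)
  have "sdim (vs.span (?R \<union> ?E)) = card (?R \<union> ?E)"
    unfolding sdim_def by (rule vs.dim_span_eq_card_independent[OF indep_main[OF assms]])
  also have "\<dots> = 2 * r"
    using card_Un_disjoint[of ?R ?E] disj_RE[of r n C] card_R[of r n C] card_E[where 'a='a, of r]
    by simp
  finally show ?thesis using eq dU dimV[OF assms, of C] by (simp add: injdist_def)
qed

theorem lemma9:
  fixes \<C> :: "(nat \<Rightarrow> nat \<Rightarrow> 'a::{finite,field}) set"
    and n r :: nat
  assumes "1 \<le> r" and "r \<le> n div 2"
    and "\<C> \<subseteq> Mats r (n - r)" and "\<C> \<noteq> {}"
  shows "(MAX U \<in> (Grass r n :: (nat \<Rightarrow> 'a) set set).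
            MIN C \<in> \<C>. injdist U (rowspace_IC r n C)) = r"
proof -
  have n2: "2 * r \<le> n" using assms(2) by linarith
  define f where "f U = (MIN C \<in> \<C>. injdist U (rowspace_IC r n C))" for U :: "(nat \<Rightarrow> 'a) set"
  obtain C0 where C0: "C0 \<in> \<C>" using assms(4) by blast
  have fle: "f U \<le> r" if U: "U \<in> Grass r n" for U
  proof -
    have fin: "finite ((\<lambda>C. injdist U (rowspace_IC r n C)) ` \<C>)"
      by (rule finite_subset[of _ "{..r}"]) (auto intro: upper[OF n2 assms(1) U])
    have "f U \<le> injdist U (rowspace_IC r n C0)"
      unfolding f_def using fin C0 by (intro Min_le) auto
    also have "\<dots> \<le> r" by (rule upper[OF n2 assms(1) U])
    finally show ?thesis .
  qed
  let ?U0 = "vs.span (ee ` {r..<2*r}) :: (nat \<Rightarrow> 'a) set"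
  have U0: "?U0 \<in> Grass r n" by (rule U0_Grass[OF n2])
  have "(\<lambda>C. injdist ?U0 (rowspace_IC r n C)) ` \<C> = {r}"
    using lower[OF n2] assms(4) by auto
  then have fU0: "f ?U0 = r" unfolding f_def by simp
  have "Max (f ` Grass r n) = r"
  proof (rule Max_eqI)
    show "finite (f ` Grass r n)"
      by (rule finite_subset[of _ "{..r}"]) (auto intro: fle)
    show "y \<le> r" if "y \<in> f ` Grass r n" for y using that fle by auto
    show "r \<in> f ` Grass r n" using U0 fU0 by (metis image_eqI)
  qed
  then show ?thesis unfolding f_def .
qed

end
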